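(* Let $\xi$ be the Hopf vector field on the unit sphere $S^{n+1}$, $n=2m$. Let $X,Y$ be orthonormal tangent vectors at a point of $S^{n+1}$ and $X_\xi^\tau,Y_\xi^\tau$ their $\xi$-tangential lifts. Then the sectional curvature of $\xi(S^{n+1})$ along the 2-plane spanned by $X_\xi^\tau,Y_\xi^\tau$ is $$\tilde K(X_\xi^\tau,Y_\xi^\tau)=\frac{1-\frac34\big[\langle\xi,X\rangle^2+\langle\xi,Y\rangle^2\big]+\frac32\langle A_\xi X,Y\rangle^2}{2-\big[\langle\xi,X\rangle^2+\langle\xi,Y\rangle^2\big]}.$$
   Context: A Hopf vector field on $S^{2m+1}\subset\mathbb R^{2m+2}$ is $\xi(x)=Jx$ for an orthogonal complex structure $J$ on $\mathbb R^{2m+2}$. $\nabla$ is the Levi-Civita connection of the sphere and $A_\xi X=-\nabla_X\xi$. $T_1S^{n+1}$ carries the metric induced from the Sasaki metric $\langle\langle \tilde X,\tilde Y\rangle\rangle=\langle \pi_*\tilde X,\pi_*\tilde Y\rangle+\langle K\tilde X,K\tilde Y\rangle$ on $TS^{n+1}$, and $\xi(S^{n+1})$ is the image of $\xi$ with the induced metric. At points of $\xi(S^{n+1})$, $Z^t=Z^v-\langle Z,\xi\rangle\xi^v$ and $X_\xi^\tau=X^h-(A_\xi X)^t$, which is tangent to $\xi(S^{n+1})$. *)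

theory Defs
  imports "HOL-Analysis.Analysis"
begin

definition pd :: "'k::finite \<Rightarrow> (real^'k \<Rightarrow> 'c::real_normed_vector) \<Rightarrow> real^'k \<Rightarrow> 'c" where
  "pd i f u = frechet_derivative f (at u) (axis i 1)"

fun Ck_on :: "nat \<Rightarrow> (real^'k::finite) set \<Rightarrow> (real^'k \<Rightarrow> 'c::real_normed_vector) \<Rightarrow> bool" where
  "Ck_on 0 U f = continuous_on U f"
| "Ck_on (Suc k) U f = (f differentiable_on U \<and> (\<forall>i. Ck_on k U (pd i f)))"

definition smooth_on :: "(real^'k::finite) set \<Rightarrow> (real^'k \<Rightarrow> 'c::real_normed_vector) \<Rightarrow> bool" where
  "smooth_on U f \<longleftrightarrow> (\<forall>k. Ck_on k U f)"

definition complex_structure :: "real^'n^'n \<Rightarrow> bool" where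
  "complex_structure J \<longleftrightarrow> orthogonal_matrix J \<and> J ** J = - mat 1"

definition tproj :: "real^'n \<Rightarrow> real^'n \<Rightarrow> real^'n" where
  "tproj p w = w - (w \<bullet> p) *\<^sub>R p"

definition hopf :: "real^'n^'n \<Rightarrow> real^'n \<Rightarrow> real^'n" where
  "hopf J x = J *v x"

text \<open>Levi-Civita connection of the round sphere applied to the Hopf field:
  nabla_X xi at p is the tangential part of the ambient derivative D_X (J x) = J X.
  The shape operator A_xi X = - nabla_X xi.\<close>
definition A_hopf :: "real^'n^'n \<Rightarrow> real^'n \<Rightarrow> real^'n \<Rightarrow> real^'n" where
  "A_hopf J p X = - tproj p (J *v X)"

text \<open>A map u \<mapsto> (P u, V u) into TS^{n+1} (|P u| = 1, V u \<perp> P u).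
  For a tangent vector Z = d(P,V)(w) of TS^{n+1}: pi_* Z = dP(w) and the connection map
  K Z = covariant derivative of V along P, i.e. tproj (P u) (dV(w)).
  Sasaki metric: <<Z,W>> = <pi_* Z, pi_* W> + <K Z, K W>.\<close>
definition sasaki_pullback ::
  "(real^'k::finite \<Rightarrow> real^'n) \<Rightarrow> (real^'k \<Rightarrow> real^'n) \<Rightarrow> real^'k \<Rightarrow> real^'k \<Rightarrow> real^'k \<Rightarrow> real" where
  "sasaki_pullback P V u a b =
     frechet_derivative P (at u) a \<bullet> frechet_derivative P (at u) b
     + tproj (P u) (frechet_derivative V (at u) a) \<bullet> tproj (P u) (frechet_derivative V (at u) b)"

definition metric_matrix ::
  "(real^'k::finite \<Rightarrow> real^'n) \<Rightarrow> (real^'k \<Rightarrow> real^'n) \<Rightarrow> real^'k \<Rightarrow> real^'k^'k" where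
  "metric_matrix P V u = (\<chi> i j. sasaki_pullback P V u (axis i 1) (axis j 1))"

text \<open>Christoffel symbols Gamma^l_{ij} (argument order: l i j).\<close>
definition christoffel :: "(real^'k::finite \<Rightarrow> real^'k^'k) \<Rightarrow> real^'k \<Rightarrow> 'k \<Rightarrow> 'k \<Rightarrow> 'k \<Rightarrow> real" where
  "christoffel g u l i j = (1/2) * (\<Sum>s\<in>UNIV. matrix_inv (g u) $ l $ s *
      (pd i (\<lambda>v. g v $ j $ s) u + pd j (\<lambda>v. g v $ i $ s) u - pd s (\<lambda>v. g v $ i $ j) u))"

text \<open>R(d_i,d_j) d_k = sum_l riemann g u l i j k d_l, with
  R(X,Y)Z = nabla_X nabla_Y Z - nabla_Y nabla_X Z - nabla_[X,Y] Z.\<close>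
definition riemann :: "(real^'k::finite \<Rightarrow> real^'k^'k) \<Rightarrow> real^'k \<Rightarrow> 'k \<Rightarrow> 'k \<Rightarrow> 'k \<Rightarrow> 'k \<Rightarrow> real" where
  "riemann g u l i j k =
     pd i (\<lambda>v. christoffel g v l j k) u - pd j (\<lambda>v. christoffel g v l i k) u
     + (\<Sum>s\<in>UNIV. christoffel g u s j k * christoffel g u l i s
                  - christoffel g u s i k * christoffel g u l j s)"

definition gform :: "(real^'k::finite \<Rightarrow> real^'k^'k) \<Rightarrow> real^'k \<Rightarrow> real^'k \<Rightarrow> real^'k \<Rightarrow> real" where
  "gform g u a b = (\<Sum>i\<in>UNIV. \<Sum>j\<in>UNIV. a $ i * b $ j * g u $ i $ j)"

definition sectional_curvature :: "(real^'k::finite \<Rightarrow> real^'k^'k) \<Rightarrow> real^'k \<Rightarrow> real^'k \<Rightarrow> real^'k \<Rightarrow> real" where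
  "sectional_curvature g u a b =
     (\<Sum>i\<in>UNIV. \<Sum>j\<in>UNIV. \<Sum>k\<in>UNIV. \<Sum>l\<in>UNIV. \<Sum>m\<in>UNIV.
        a $ i * b $ j * b $ k * a $ m * riemann g u l i j k * g u $ l $ m)
     / (gform g u a a * gform g u b b - (gform g u a b)\<^sup>2)"

end

theory Submission
  imports Defs
begin


lemma fd_expand:
  fixes f :: "real^'k::finite \<Rightarrow> 'c::real_normed_vector"
  assumes "f differentiable (at v)"
  shows "(f has_derivative (\<lambda>h. \<Sum>l\<in>UNIV. h$l *\<^sub>R pd l f v)) (at v)"
proof -
  have lin: "linear (frechet_derivative f (at v))"
    using assms frechet_derivative_works has_derivative_linear by blast
  have "frechet_derivative f (at v) h = (\<Sum>l\<in>UNIV. h$l *\<^sub>R pd l f v)" for h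
  proof -
    have "frechet_derivative f (at v) h = frechet_derivative f (at v) (\<Sum>l\<in>UNIV. h$l *\<^sub>R axis l 1)"
      using basis_expansion[of h] by (simp add: scalar_mult_eq_scaleR)
    also have "\<dots> = (\<Sum>l\<in>UNIV. h$l *\<^sub>R frechet_derivative f (at v) (axis l 1))"
      using lin by (simp add: linear_sum linear_scale)
    finally show ?thesis by (simp add: pd_def)
  qed
  then have "frechet_derivative f (at v) = (\<lambda>h. \<Sum>l\<in>UNIV. h$l *\<^sub>R pd l f v)" by auto
  then show ?thesis using assms frechet_derivative_works by metis
qed

lemma line_deriv:
  fixes f :: "real^'k::finite \<Rightarrow> real"
  assumes "(f has_derivative (\<lambda>h. \<Sum>l\<in>UNIV. h$l * D l)) (at (c + s *\<^sub>R axis i 1))"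
  shows "((\<lambda>s. f (c + s *\<^sub>R axis i 1)) has_real_derivative D i) (at s)"
proof -
  have g: "((\<lambda>s. c + s *\<^sub>R axis i 1) has_derivative (\<lambda>h. h *\<^sub>R axis i 1)) (at s)"
    by (auto intro!: derivative_eq_intros)
  have "((\<lambda>s. f (c + s *\<^sub>R axis i 1)) has_derivative (\<lambda>h. \<Sum>l\<in>UNIV. (h *\<^sub>R axis i 1)$l * D l)) (at s)"
    using has_derivative_compose[OF g assms] by simp
  moreover have "(\<lambda>h. \<Sum>l\<in>UNIV. (h *\<^sub>R axis i 1)$l * D l) = (\<lambda>h. D i * h)"
  proof
    fix h
    have "(h *\<^sub>R axis i 1)$l * D l = (if l = i then D i * h else 0)" for l
      by (simp add: axis_def)
    then show "(\<Sum>l\<in>UNIV. (h *\<^sub>R axis i 1)$l * D l) = D i * h" by simp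
  qed
  ultimately show ?thesis by (simp add: has_field_derivative_def)
qed

lemma schwarz_aux:
  fixes f :: "real^'k::finite \<Rightarrow> real"
  assumes df: "\<And>v. v \<in> U \<Longrightarrow> (f has_derivative (\<lambda>h. \<Sum>l\<in>UNIV. h$l * D1 l v)) (at v)"
    and dd: "\<And>v l. v \<in> U \<Longrightarrow> (D1 l has_derivative (\<lambda>h. \<Sum>m\<in>UNIV. h$m * D2 l m v)) (at v)"
    and t: "t > 0"
    and box: "\<And>\<sigma> \<tau>. 0 \<le> \<sigma> \<Longrightarrow> \<sigma> \<le> t \<Longrightarrow> 0 \<le> \<tau> \<Longrightarrow> \<tau> \<le> t \<Longrightarrow> u + \<sigma> *\<^sub>R axis i 1 + \<tau> *\<^sub>R axis j 1 \<in> U"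
  shows "\<exists>\<sigma> \<tau>. 0 < \<sigma> \<and> \<sigma> < t \<and> 0 < \<tau> \<and> \<tau> < t \<and>
     f (u + t *\<^sub>R axis i 1 + t *\<^sub>R axis j 1) - f (u + t *\<^sub>R axis i 1) - f (u + t *\<^sub>R axis j 1) + f u
      = t^2 * D2 i j (u + \<sigma> *\<^sub>R axis i 1 + \<tau> *\<^sub>R axis j 1)"
proof -
  define A where "A \<sigma> = f (u + t *\<^sub>R axis j 1 + \<sigma> *\<^sub>R axis i 1) - f (u + \<sigma> *\<^sub>R axis i 1)" for \<sigma>
  have "(A has_real_derivative (D1 i (u + t *\<^sub>R axis j 1 + \<sigma> *\<^sub>R axis i 1) - D1 i (u + \<sigma> *\<^sub>R axis i 1))) (at \<sigma>)"
    if "0 \<le> \<sigma>" "\<sigma> \<le> t" for \<sigma>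
  proof -
    have m1: "u + t *\<^sub>R axis j 1 + \<sigma> *\<^sub>R axis i 1 \<in> U"
      using box[of \<sigma> t] that t by (simp add: add_ac)
    have m2: "u + \<sigma> *\<^sub>R axis i 1 \<in> U"
      using box[of \<sigma> 0] that t by simp
    show ?thesis unfolding A_def
      by (intro DERIV_diff line_deriv[where c = "u + t *\<^sub>R axis j 1"] line_deriv[where c = u] df m1 m2)
  qed
  from MVT2[OF t this] obtain \<sigma> where s: "0 < \<sigma>" "\<sigma> < t"
    "A t - A 0 = (t - 0) * (D1 i (u + t *\<^sub>R axis j 1 + \<sigma> *\<^sub>R axis i 1) - D1 i (u + \<sigma> *\<^sub>R axis i 1))"
    by auto
  define B where "B \<tau> = D1 i (u + \<sigma> *\<^sub>R axis i 1 + \<tau> *\<^sub>R axis j 1)" for \<tau>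
  have "(B has_real_derivative D2 i j (u + \<sigma> *\<^sub>R axis i 1 + \<tau> *\<^sub>R axis j 1)) (at \<tau>)"
    if "0 \<le> \<tau>" "\<tau> \<le> t" for \<tau>
    unfolding B_def
    by (intro line_deriv[where c = "u + \<sigma> *\<^sub>R axis i 1" and f = "D1 i"] dd box) (use that s in auto)
  from MVT2[OF t this] obtain \<tau> where tt: "0 < \<tau>" "\<tau> < t"
    "B t - B 0 = (t - 0) * D2 i j (u + \<sigma> *\<^sub>R axis i 1 + \<tau> *\<^sub>R axis j 1)"
    by auto
  have "f (u + t *\<^sub>R axis i 1 + t *\<^sub>R axis j 1) - f (u + t *\<^sub>R axis i 1) - f (u + t *\<^sub>R axis j 1) + f u
      = A t - A 0" unfolding A_def by (simp add: add_ac)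
  also have "\<dots> = t * (B t - B 0)" using s(3) unfolding B_def by (simp add: add_ac)
  also have "\<dots> = t^2 * D2 i j (u + \<sigma> *\<^sub>R axis i 1 + \<tau> *\<^sub>R axis j 1)"
    using tt(3) by (simp add: power2_eq_square)
  finally show ?thesis using s tt by blast
qed

lemma schwarz_real:
  fixes f :: "real^'k::finite \<Rightarrow> real"
  assumes U: "open U" "u \<in> U"
    and df: "\<And>v. v \<in> U \<Longrightarrow> (f has_derivative (\<lambda>h. \<Sum>l\<in>UNIV. h$l * D1 l v)) (at v)"
    and dd: "\<And>v l. v \<in> U \<Longrightarrow> (D1 l has_derivative (\<lambda>h. \<Sum>m\<in>UNIV. h$m * D2 l m v)) (at v)"
    and c1: "continuous (at u) (D2 i j)" and c2: "continuous (at u) (D2 j i)"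
  shows "D2 i j u = D2 j i u"
proof (rule ccontr)
  assume ne: "D2 i j u \<noteq> D2 j i u"
  define \<epsilon> where "\<epsilon> = \<bar>D2 i j u - D2 j i u\<bar> / 2"
  have e: "\<epsilon> > 0" using ne by (simp add: \<epsilon>_def)
  obtain d1 where d1: "d1 > 0" "\<And>w. dist w u < d1 \<Longrightarrow> dist (D2 i j w) (D2 i j u) < \<epsilon>"
    using c1 e unfolding continuous_at_eps_delta by blast
  obtain d2 where d2: "d2 > 0" "\<And>w. dist w u < d2 \<Longrightarrow> dist (D2 j i w) (D2 j i u) < \<epsilon>"
    using c2 e unfolding continuous_at_eps_delta by blast
  obtain d0 where d0: "d0 > 0" "ball u d0 \<subseteq> U"
    using U open_contains_ball by blast
  define d where "d = min d0 (min d1 d2)"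
  define t where "t = d / 3"
  have t: "t > 0" using d0 d1 d2 by (simp add: t_def d_def)
  have near: "dist (u + \<sigma> *\<^sub>R axis a 1 + \<tau> *\<^sub>R axis b 1) u < d"
    if "0 \<le> \<sigma>" "\<sigma> \<le> t" "0 \<le> \<tau>" "\<tau> \<le> t" for \<sigma> \<tau> a b
  proof -
    have "dist (u + \<sigma> *\<^sub>R axis a 1 + \<tau> *\<^sub>R axis b 1) u = norm (\<sigma> *\<^sub>R axis a (1::real) + \<tau> *\<^sub>R axis b 1)"
      by (simp add: dist_norm)
    also have "\<dots> \<le> norm (\<sigma> *\<^sub>R axis a (1::real)) + norm (\<tau> *\<^sub>R axis b (1::real))"
      by (rule norm_triangle_ineq)
    also have "\<dots> = \<sigma> + \<tau>" using that by simp
    also have "\<dots> < d" using that t by (simp add: t_def)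
    finally show ?thesis .
  qed
  have box: "u + \<sigma> *\<^sub>R axis a 1 + \<tau> *\<^sub>R axis b 1 \<in> U"
    if "0 \<le> \<sigma>" "\<sigma> \<le> t" "0 \<le> \<tau>" "\<tau> \<le> t" for \<sigma> \<tau> a b
    using near[OF that, of a b] d0 by (auto simp: d_def dist_commute)
  obtain \<sigma>1 \<tau>1 where p1: "0 < \<sigma>1" "\<sigma>1 < t" "0 < \<tau>1" "\<tau>1 < t"
    "f (u + t *\<^sub>R axis i 1 + t *\<^sub>R axis j 1) - f (u + t *\<^sub>R axis i 1) - f (u + t *\<^sub>R axis j 1) + f u
      = t^2 * D2 i j (u + \<sigma>1 *\<^sub>R axis i 1 + \<tau>1 *\<^sub>R axis j 1)"
    using schwarz_aux[of U f D1 D2 t u i j, OF df dd t box] by blast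
  obtain \<sigma>2 \<tau>2 where p2: "0 < \<sigma>2" "\<sigma>2 < t" "0 < \<tau>2" "\<tau>2 < t"
    "f (u + t *\<^sub>R axis j 1 + t *\<^sub>R axis i 1) - f (u + t *\<^sub>R axis j 1) - f (u + t *\<^sub>R axis i 1) + f u
      = t^2 * D2 j i (u + \<sigma>2 *\<^sub>R axis j 1 + \<tau>2 *\<^sub>R axis i 1)"
    using schwarz_aux[of U f D1 D2 t u j i, OF df dd t box] by blast
  have "t^2 * D2 i j (u + \<sigma>1 *\<^sub>R axis i 1 + \<tau>1 *\<^sub>R axis j 1) = t^2 * D2 j i (u + \<sigma>2 *\<^sub>R axis j 1 + \<tau>2 *\<^sub>R axis i 1)"
  proof -
    have e: "u + t *\<^sub>R axis j 1 + t *\<^sub>R axis i 1 = u + t *\<^sub>R axis i 1 + t *\<^sub>R axis j 1" by (simp add: add_ac)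
    have "f (u + t *\<^sub>R axis i 1 + t *\<^sub>R axis j 1) - f (u + t *\<^sub>R axis j 1) - f (u + t *\<^sub>R axis i 1) + f u
      = t^2 * D2 j i (u + \<sigma>2 *\<^sub>R axis j 1 + \<tau>2 *\<^sub>R axis i 1)" using p2(5) by (simp only: e)
    then show ?thesis using p1(5) by linarith
  qed
  then have eq: "D2 i j (u + \<sigma>1 *\<^sub>R axis i 1 + \<tau>1 *\<^sub>R axis j 1) = D2 j i (u + \<sigma>2 *\<^sub>R axis j 1 + \<tau>2 *\<^sub>R axis i 1)"
    using t by simp
  have a1: "dist (D2 i j (u + \<sigma>1 *\<^sub>R axis i 1 + \<tau>1 *\<^sub>R axis j 1)) (D2 i j u) < \<epsilon>"
    using d1(2) near[of \<sigma>1 \<tau>1 i j] p1 by (force simp: d_def)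
  have a2: "dist (D2 j i (u + \<sigma>2 *\<^sub>R axis j 1 + \<tau>2 *\<^sub>R axis i 1)) (D2 j i u) < \<epsilon>"
    using d2(2) near[of \<sigma>2 \<tau>2 j i] p2 by (force simp: d_def)
  show False using a1 a2 eq by (simp add: dist_real_def \<epsilon>_def abs_if split: if_splits)
qed



lemma sum_axis_R [simp]: "(\<Sum>j\<in>UNIV. axis i (1::real) $ j *\<^sub>R (F j::'e::real_vector)) = F i"
proof -
  have "axis i (1::real) $ j *\<^sub>R F j = (if j = i then F i else 0)" for j by (cases "j = i") (auto simp: axis_def)
  then show ?thesis by simp
qed

lemma sum_axis_mult [simp]: "(\<Sum>j\<in>UNIV. axis i (1::real) $ j * F j) = F i"
proof -
  have "axis i (1::real) $ j * F j = (if j = i then F i else 0)" for j by (cases "j = i") (auto simp: axis_def)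
  then show ?thesis by simp
qed

lemma pd_eq:
  assumes "(f has_derivative f') (at v)"
  shows "pd i f v = f' (axis i 1)"
  using assms frechet_derivative_at pd_def by metis

lemma pd_hasD:
  assumes "(f has_derivative (\<lambda>h. \<Sum>j\<in>UNIV. h$j *\<^sub>R F j)) (at v)"
  shows "pd i f v = F i"
  using pd_eq[OF assms] by simp

lemma pd_cong_open:
  assumes "open U" "u \<in> U" "\<And>v. v \<in> U \<Longrightarrow> f v = g v"
  shows "pd i f u = pd i g u"
proof -
  have "(f has_derivative f') (at u) = (g has_derivative f') (at u)" for f'
    using has_derivative_transform_within_open[of f f' u UNIV U g]
      has_derivative_transform_within_open[of g f' u UNIV U f] assms by auto
  then show ?thesis unfolding pd_def frechet_derivative_def by simp
qed

lemma pd_mult: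
  fixes f g :: "real^'k::finite \<Rightarrow> real"
  assumes "f differentiable (at v)" "g differentiable (at v)"
  shows "pd i (\<lambda>v. f v * g v) v = pd i f v * g v + f v * pd i g v"
  using pd_eq[OF has_derivative_mult[OF assms[unfolded frechet_derivative_works]]]
  by (simp add: pd_def)

lemma pd_inner:
  fixes f g :: "real^'k::finite \<Rightarrow> 'e::real_inner"
  assumes "f differentiable (at v)" "g differentiable (at v)"
  shows "pd i (\<lambda>v. f v \<bullet> g v) v = pd i f v \<bullet> g v + f v \<bullet> pd i g v"
  using pd_eq[OF has_derivative_inner[OF assms[unfolded frechet_derivative_works]]]
  by (simp add: pd_def)

lemma pd_sum:
  fixes F :: "'l \<Rightarrow> real^'k::finite \<Rightarrow> 'e::real_normed_vector"
  assumes "finite S" "\<And>l. l \<in> S \<Longrightarrow> F l differentiable (at v)"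
  shows "pd i (\<lambda>v. \<Sum>l\<in>S. F l v) v = (\<Sum>l\<in>S. pd i (F l) v)"
proof -
  have "((\<lambda>v. \<Sum>l\<in>S. F l v) has_derivative (\<lambda>h. \<Sum>l\<in>S. frechet_derivative (F l) (at v) h)) (at v)"
    using assms by (intro has_derivative_sum) (auto simp: frechet_derivative_works)
  from pd_eq[OF this] show ?thesis by (simp add: pd_def)
qed

lemma differentiable_prod_fin:
  fixes F :: "'l \<Rightarrow> real^'k::finite \<Rightarrow> real"
  assumes "finite S" "\<And>l. l \<in> S \<Longrightarrow> F l differentiable (at v)"
  shows "(\<lambda>v. \<Prod>l\<in>S. F l v) differentiable (at v)"
  using assms
proof (induction S rule: finite_induct)
  case empty then show ?case by simp
next
  case (insert x S)
  then show ?case by (simp add: differentiable_mult)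
qed

lemma det_differentiable:
  fixes M :: "real^'k::finite \<Rightarrow> real^'n::finite^'n"
  assumes "\<And>i j. (\<lambda>v. M v $ i $ j) differentiable (at u)"
  shows "(\<lambda>v. det (M v)) differentiable (at u)"
  unfolding det_def
  by (intro differentiable_sum differentiable_mult differentiable_prod_fin assms)
     (auto intro!: differentiable_prod_fin assms simp: finite_permutations)

lemma minv_right: "invertible A \<Longrightarrow> A ** matrix_inv A = mat 1"
  unfolding invertible_def matrix_inv_def by (rule someI_ex[THEN conjunct1])

lemma minv_left: "invertible A \<Longrightarrow> matrix_inv A ** A = mat 1"
  unfolding invertible_def matrix_inv_def by (rule someI_ex[THEN conjunct2])

lemma minv_entry:
  fixes A :: "real^'n::finite^'n"
  assumes "invertible A"
  shows "matrix_inv A $ l $ s = det (\<chi> i j. if j = l then axis s 1 $ i else A$i$j) / det A"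
proof -
  define x where "x = (\<chi> l. matrix_inv A $ l $ s)"
  have "A *v x = axis s 1"
  proof -
    have "(A *v x) $ i = (A ** matrix_inv A) $ i $ s" for i
      by (simp add: x_def matrix_vector_mult_def matrix_matrix_mult_def)
    then show ?thesis using minv_right[OF assms]
      by (simp add: vec_eq_iff mat_def axis_def)
  qed
  moreover have "det A \<noteq> 0" using assms invertible_det_nz by blast
  ultimately have "x = (\<chi> k. det(\<chi> i j. if j=k then axis s 1$i else A$i$j) / det A)"
    using cramer by blast
  then show ?thesis by (simp add: x_def vec_eq_iff)
qed

lemma minv_differentiable:
  fixes M :: "real^'k::finite \<Rightarrow> real^'n::finite^'n"
  assumes U: "open U" "u \<in> U" and inv: "\<And>v. v \<in> U \<Longrightarrow> invertible (M v)"
    and d: "\<And>i j. (\<lambda>v. M v $ i $ j) differentiable (at u)"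
  shows "(\<lambda>v. matrix_inv (M v) $ l $ s) differentiable (at u)"
proof -
  let ?f = "\<lambda>v. det (\<chi> i j. if j = l then axis s 1 $ i else M v$i$j) / det (M v)"
  have "?f differentiable (at u)"
  proof (intro differentiable_divide det_differentiable)
    show "(\<lambda>v. (\<chi> i j. if j = l then axis s 1 $ i else M v $ i $ j) $ i $ j) differentiable at u" for i j
      using d by (cases "j = l") auto
    show "(\<lambda>v. M v $ i $ j) differentiable at u" for i j by (rule d)
    show "det (M u) \<noteq> 0" using inv U invertible_det_nz by blast
  qed
  then obtain D where "(?f has_derivative D) (at u)" unfolding differentiable_def by blast
  then have "((\<lambda>v. matrix_inv (M v) $ l $ s) has_derivative D) (at u)"
    by (rule has_derivative_transform_within_open[OF _ U]) (simp add: minv_entry inv)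
  then show ?thesis unfolding differentiable_def by blast
qed



lemma differentiable_transform_open:
  assumes "open U" "u \<in> U" "\<And>v. v \<in> U \<Longrightarrow> f v = g v" "f differentiable (at u)"
  shows "g differentiable (at u)"
  using assms has_derivative_transform_within_open unfolding differentiable_def by metis

lemma gauss:
  fixes P1 :: "'k::finite \<Rightarrow> real^'k \<Rightarrow> 'e::real_inner"
    and P2 :: "'k \<Rightarrow> 'k \<Rightarrow> real^'k \<Rightarrow> 'e" and P3 :: "'k \<Rightarrow> 'k \<Rightarrow> 'k \<Rightarrow> 'e"
    and g :: "real^'k \<Rightarrow> real^'k^'k"
  assumes U: "open U" "u \<in> U"
    and H1: "\<And>v i. v \<in> U \<Longrightarrow> (P1 i has_derivative (\<lambda>h. \<Sum>j\<in>UNIV. h$j *\<^sub>R P2 i j v)) (at v)"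
    and H2: "\<And>v i j. v \<in> U \<Longrightarrow> P2 i j v = P2 j i v"
    and H3: "\<And>i j. (P2 i j has_derivative (\<lambda>h. \<Sum>k\<in>UNIV. h$k *\<^sub>R P3 i j k)) (at u)"
    and H4: "\<And>i j k. P3 j k i = P3 i k j"
    and H5: "\<And>v. v \<in> U \<Longrightarrow> g v = (\<chi> i j. P1 i v \<bullet> P1 j v)"
    and H6: "\<And>v. v \<in> U \<Longrightarrow> invertible (g v)"
  shows "(\<Sum>l\<in>UNIV. riemann g u l i j k * g u $ l $ m) =
     (P2 j k u - (\<Sum>l\<in>UNIV. (\<Sum>s\<in>UNIV. matrix_inv (g u) $ l $ s * (P2 j k u \<bullet> P1 s u)) *\<^sub>R P1 l u)) \<bullet> P2 m i u
   - (P2 i k u - (\<Sum>l\<in>UNIV. (\<Sum>s\<in>UNIV. matrix_inv (g u) $ l $ s * (P2 i k u \<bullet> P1 s u)) *\<^sub>R P1 l u)) \<bullet> P2 m j u"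
proof -
  define C where "C v l i j = (\<Sum>s\<in>UNIV. matrix_inv (g v) $ l $ s * (P2 i j v \<bullet> P1 s v))" for v l i j
  have dP1: "P1 i differentiable (at v)" if "v \<in> U" for i v
    using H1[OF that] unfolding differentiable_def by blast
  have dP2: "P2 i j differentiable (at u)" for i j
    using H3 unfolding differentiable_def by blast
  have S1: "pd k (\<lambda>w. g w $ i $ j) v = P2 i k v \<bullet> P1 j v + P1 i v \<bullet> P2 j k v" if v: "v \<in> U" for i j k v
  proof -
    have "pd k (\<lambda>w. g w $ i $ j) v = pd k (\<lambda>w. P1 i w \<bullet> P1 j w) v"
      by (rule pd_cong_open[OF U(1) v]) (simp add: H5)
    also have "\<dots> = P2 i k v \<bullet> P1 j v + P1 i v \<bullet> P2 j k v"
      using pd_eq[OF has_derivative_inner[OF H1[OF v, of i] H1[OF v, of j]]] by simp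
    finally show ?thesis .
  qed
  have gsym: "g v $ i $ j = g v $ j $ i" if "v \<in> U" for v i j
    using that by (simp add: H5 inner_commute)
  have S2: "christoffel g v l i j = C v l i j" if v: "v \<in> U" for v l i j
  proof -
    have "pd i (\<lambda>w. g w $ j $ s) v + pd j (\<lambda>w. g w $ i $ s) v - pd s (\<lambda>w. g w $ i $ j) v
        = 2 * (P2 i j v \<bullet> P1 s v)" for s
      using H2[OF v, of j i] H2[OF v, of s i] H2[OF v, of s j]
      by (simp add: S1[OF v] inner_commute)
    then show ?thesis unfolding christoffel_def C_def
      by (simp add: sum_distrib_left mult_ac)
  qed
  have S3: "(\<Sum>l\<in>UNIV. C v l j k * g v $ l $ m) = P2 j k v \<bullet> P1 m v" if v: "v \<in> U" for v j k m
  proof -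
    have "(\<Sum>l\<in>UNIV. C v l j k * g v $ l $ m)
        = (\<Sum>l\<in>UNIV. \<Sum>s\<in>UNIV. (P2 j k v \<bullet> P1 s v) * (g v $ m $ l * matrix_inv (g v) $ l $ s))"
      unfolding C_def by (simp add: sum_distrib_right sum_distrib_left gsym[OF v, of _ m] mult_ac)
    also have "\<dots> = (\<Sum>s\<in>UNIV. (P2 j k v \<bullet> P1 s v) * (\<Sum>l\<in>UNIV. g v $ m $ l * matrix_inv (g v) $ l $ s))"
      by (subst sum.swap) (simp add: sum_distrib_left)
    also have "\<dots> = (\<Sum>s\<in>UNIV. (P2 j k v \<bullet> P1 s v) * (if m = s then 1 else 0))"
    proof -
      have "(\<Sum>l\<in>UNIV. g v $ m $ l * matrix_inv (g v) $ l $ s) = (g v ** matrix_inv (g v)) $ m $ s" for s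
        by (simp add: matrix_matrix_mult_def)
      then show ?thesis using minv_right[OF H6[OF v]] by (simp add: mat_def)
    qed
    also have "\<dots> = P2 j k v \<bullet> P1 m v" by (simp add: if_distrib cong: if_cong)
    finally show ?thesis .
  qed
  have dg: "(\<lambda>v. g v $ i $ j) differentiable (at u)" for i j
    by (rule differentiable_transform_open[OF U, of "\<lambda>v. P1 i v \<bullet> P1 j v"])
       (auto simp: H5 intro: differentiable_inner dP1 U)
  have dC: "(\<lambda>v. C v l j k) differentiable (at u)" for l j k
    unfolding C_def
  proof (intro differentiable_sum ballI)
    fix s
    show "(\<lambda>x. matrix_inv (g x) $ l $ s * (P2 j k x \<bullet> P1 s x)) differentiable at u"
      by (intro differentiable_mult minv_differentiable[OF U H6] dg
        differentiable_inner dP2 dP1 U) auto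
  qed simp
  have S5: "(\<Sum>l\<in>UNIV. pd i (\<lambda>v. C v l j k) u * g u $ l $ m)
      = P3 j k i \<bullet> P1 m u + P2 j k u \<bullet> P2 m i u
        - (\<Sum>l\<in>UNIV. C u l j k * (P2 l i u \<bullet> P1 m u + P1 l u \<bullet> P2 m i u))" for i j k m
  proof -
    have "pd i (\<lambda>v. \<Sum>l\<in>UNIV. C v l j k * g v $ l $ m) u = pd i (\<lambda>v. P2 j k v \<bullet> P1 m v) u"
      by (rule pd_cong_open[OF U]) (rule S3)
    also have "\<dots> = P3 j k i \<bullet> P1 m u + P2 j k u \<bullet> P2 m i u"
      using pd_inner[OF dP2 dP1[OF U(2)], of i j k m] pd_hasD[OF H3] pd_hasD[OF H1[OF U(2)]] by simp
    finally have A: "pd i (\<lambda>v. \<Sum>l\<in>UNIV. C v l j k * g v $ l $ m) u = P3 j k i \<bullet> P1 m u + P2 j k u \<bullet> P2 m i u" .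
    have "pd i (\<lambda>v. \<Sum>l\<in>UNIV. C v l j k * g v $ l $ m) u
        = (\<Sum>l\<in>UNIV. pd i (\<lambda>v. C v l j k) u * g u $ l $ m + C u l j k * (P2 l i u \<bullet> P1 m u + P1 l u \<bullet> P2 m i u))"
      by (subst pd_sum) (auto intro!: differentiable_mult dC dg simp: pd_mult[OF dC dg] S1[OF U(2)])
    then show ?thesis using A by (simp add: sum.distrib)
  qed
  have S6: "riemann g u l i j k = pd i (\<lambda>v. C v l j k) u - pd j (\<lambda>v. C v l i k) u
      + (\<Sum>s\<in>UNIV. C u s j k * C u l i s - C u s i k * C u l j s)" for l
  proof -
    have "pd i (\<lambda>v. christoffel g v l j k) u = pd i (\<lambda>v. C v l j k) u"
      "pd j (\<lambda>v. christoffel g v l i k) u = pd j (\<lambda>v. C v l i k) u"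
      by (auto intro!: pd_cong_open[OF U] S2)
    then show ?thesis unfolding riemann_def by (simp add: S2[OF U(2)])
  qed
  have T: "(\<Sum>l\<in>UNIV. (\<Sum>s\<in>UNIV. C u s j k * C u l i s) * g u $ l $ m) = (\<Sum>s\<in>UNIV. C u s j k * (P2 i s u \<bullet> P1 m u))" for i j k m
  proof -
    have "(\<Sum>l\<in>UNIV. (\<Sum>s\<in>UNIV. C u s j k * C u l i s) * g u $ l $ m)
        = (\<Sum>s\<in>UNIV. C u s j k * (\<Sum>l\<in>UNIV. C u l i s * g u $ l $ m))"
      by (simp add: sum_distrib_right sum_distrib_left mult_ac) (subst sum.swap, simp add: mult_ac)
    then show ?thesis by (simp add: S3[OF U(2)])
  qed
  have "(\<Sum>l\<in>UNIV. riemann g u l i j k * g u $ l $ m)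
      = (\<Sum>l\<in>UNIV. pd i (\<lambda>v. C v l j k) u * g u $ l $ m) - (\<Sum>l\<in>UNIV. pd j (\<lambda>v. C v l i k) u * g u $ l $ m)
        + (\<Sum>l\<in>UNIV. (\<Sum>s\<in>UNIV. C u s j k * C u l i s) * g u $ l $ m)
        - (\<Sum>l\<in>UNIV. (\<Sum>s\<in>UNIV. C u s i k * C u l j s) * g u $ l $ m)"
    unfolding S6 by (simp add: algebra_simps sum.distrib sum_subtractf sum_distrib_right)
  also have "\<dots> = P2 j k u \<bullet> P2 m i u - (\<Sum>l\<in>UNIV. C u l j k * (P1 l u \<bullet> P2 m i u))
      - (P2 i k u \<bullet> P2 m j u - (\<Sum>l\<in>UNIV. C u l i k * (P1 l u \<bullet> P2 m j u)))"
    unfolding S5 T using H4[where i=i and j=j and k=k] H2[OF U(2)]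
    by (simp add: algebra_simps sum.distrib sum_subtractf)
  also have "\<dots> = (P2 j k u - (\<Sum>l\<in>UNIV. C u l j k *\<^sub>R P1 l u)) \<bullet> P2 m i u
      - (P2 i k u - (\<Sum>l\<in>UNIV. C u l i k *\<^sub>R P1 l u)) \<bullet> P2 m j u"
    by (simp add: inner_diff_left inner_sum_left)
  finally show ?thesis unfolding C_def .
qed



lemma sum3_rot:
  "(\<Sum>x\<in>A. \<Sum>y\<in>B. \<Sum>z\<in>C. G x y z) = (\<Sum>y\<in>B. \<Sum>z\<in>C. \<Sum>x\<in>A. G x y z)"
proof -
  have "(\<Sum>x\<in>A. \<Sum>y\<in>B. \<Sum>z\<in>C. G x y z) = (\<Sum>y\<in>B. \<Sum>x\<in>A. \<Sum>z\<in>C. G x y z)"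
    by (rule sum.swap)
  also have "\<dots> = (\<Sum>y\<in>B. \<Sum>z\<in>C. \<Sum>x\<in>A. G x y z)"
    by (rule sum.cong[OF refl], rule sum.swap)
  finally show ?thesis .
qed

lemma inner_dsum:
  "(\<Sum>i\<in>A. \<Sum>j\<in>B. c i j *\<^sub>R X i j) \<bullet> (\<Sum>m\<in>C. \<Sum>n\<in>D. d m n *\<^sub>R Y m n)
    = (\<Sum>i\<in>A. \<Sum>j\<in>B. \<Sum>m\<in>C. \<Sum>n\<in>D. c i j * d m n * (X i j \<bullet> Y m n))"
proof -
  have l: "(\<Sum>i\<in>A. \<Sum>j\<in>B. c i j *\<^sub>R X i j) \<bullet> Z = (\<Sum>i\<in>A. \<Sum>j\<in>B. c i j * (X i j \<bullet> Z))" for Z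
    by (simp add: inner_sum_left)
  have r: "X i j \<bullet> (\<Sum>m\<in>C. \<Sum>n\<in>D. d m n *\<^sub>R Y m n) = (\<Sum>m\<in>C. \<Sum>n\<in>D. d m n * (X i j \<bullet> Y m n))" for i j
    by (simp add: inner_sum_right)
  show ?thesis unfolding l r by (simp add: sum_distrib_left mult.assoc)
qed

lemma sc_contract:
  fixes P2 :: "'k::finite \<Rightarrow> 'k \<Rightarrow> 'e::real_inner" and N :: "'e \<Rightarrow> 'e"
    and g :: "real^'k \<Rightarrow> real^'k^'k"
  assumes lin: "linear N"
    and G: "\<And>i j k m. (\<Sum>l\<in>UNIV. riemann g u l i j k * g u $ l $ m) = N (P2 j k) \<bullet> P2 m i - N (P2 i k) \<bullet> P2 m j"
  shows "(\<Sum>i\<in>UNIV. \<Sum>j\<in>UNIV. \<Sum>k\<in>UNIV. \<Sum>l\<in>UNIV. \<Sum>m\<in>UNIV.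
            a $ i * b $ j * b $ k * a $ m * riemann g u l i j k * g u $ l $ m)
       = N (\<Sum>i\<in>UNIV. \<Sum>j\<in>UNIV. (b$i * b$j) *\<^sub>R P2 i j) \<bullet> (\<Sum>i\<in>UNIV. \<Sum>j\<in>UNIV. (a$i * a$j) *\<^sub>R P2 i j)
       - N (\<Sum>i\<in>UNIV. \<Sum>j\<in>UNIV. (a$i * b$j) *\<^sub>R P2 i j) \<bullet> (\<Sum>i\<in>UNIV. \<Sum>j\<in>UNIV. (a$i * b$j) *\<^sub>R P2 i j)"
proof -
  have NS: "N (\<Sum>i\<in>UNIV. \<Sum>j\<in>UNIV. c i j *\<^sub>R P2 i j) = (\<Sum>i\<in>UNIV. \<Sum>j\<in>UNIV. c i j *\<^sub>R N (P2 i j))" for c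
    using lin by (simp add: linear_sum linear_scale)
  have "(\<Sum>i\<in>UNIV. \<Sum>j\<in>UNIV. \<Sum>k\<in>UNIV. \<Sum>l\<in>UNIV. \<Sum>m\<in>UNIV.
            a $ i * b $ j * b $ k * a $ m * riemann g u l i j k * g u $ l $ m)
      = (\<Sum>i\<in>UNIV. \<Sum>j\<in>UNIV. \<Sum>k\<in>UNIV. \<Sum>m\<in>UNIV.
            a $ i * b $ j * b $ k * a $ m * (\<Sum>l\<in>UNIV. riemann g u l i j k * g u $ l $ m))"
  proof -
    have inner: "(\<Sum>l\<in>UNIV. \<Sum>m\<in>UNIV. a $ i * b $ j * b $ k * a $ m * riemann g u l i j k * g u $ l $ m)
        = (\<Sum>m\<in>UNIV. a $ i * b $ j * b $ k * a $ m * (\<Sum>l\<in>UNIV. riemann g u l i j k * g u $ l $ m))" for i j k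
      by (subst sum.swap) (simp add: sum_distrib_left mult_ac)
    show ?thesis by (simp only: inner)
  qed
  also have "\<dots> = (\<Sum>i\<in>UNIV. \<Sum>j\<in>UNIV. \<Sum>k\<in>UNIV. \<Sum>m\<in>UNIV. a $ i * b $ j * b $ k * a $ m * (N (P2 j k) \<bullet> P2 m i))
      - (\<Sum>i\<in>UNIV. \<Sum>j\<in>UNIV. \<Sum>k\<in>UNIV. \<Sum>m\<in>UNIV. a $ i * b $ j * b $ k * a $ m * (N (P2 i k) \<bullet> P2 m j))"
    by (simp add: G right_diff_distrib sum_subtractf)
  also have "(\<Sum>i\<in>UNIV. \<Sum>j\<in>UNIV. \<Sum>k\<in>UNIV. \<Sum>m\<in>UNIV. a $ i * b $ j * b $ k * a $ m * (N (P2 j k) \<bullet> P2 m i))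
      = N (\<Sum>i\<in>UNIV. \<Sum>j\<in>UNIV. (b$i * b$j) *\<^sub>R P2 i j) \<bullet> (\<Sum>i\<in>UNIV. \<Sum>j\<in>UNIV. (a$i * a$j) *\<^sub>R P2 i j)"
  proof -
    have "(\<Sum>i\<in>UNIV. \<Sum>j\<in>UNIV. \<Sum>k\<in>UNIV. \<Sum>m\<in>UNIV. a $ i * b $ j * b $ k * a $ m * (N (P2 j k) \<bullet> P2 m i))
        = (\<Sum>j\<in>UNIV. \<Sum>k\<in>UNIV. \<Sum>i\<in>UNIV. \<Sum>m\<in>UNIV. a $ i * b $ j * b $ k * a $ m * (N (P2 j k) \<bullet> P2 m i))"
      by (rule sum3_rot)
    also have "\<dots> = (\<Sum>j\<in>UNIV. \<Sum>k\<in>UNIV. \<Sum>m\<in>UNIV. \<Sum>i\<in>UNIV. a $ i * b $ j * b $ k * a $ m * (N (P2 j k) \<bullet> P2 m i))"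
      by (simp only: sum.swap[of "\<lambda>i m. a $ i * b $ j * b $ k * a $ m * (N (P2 j k) \<bullet> P2 m i)" for j k])
    also have "\<dots> = (\<Sum>j\<in>UNIV. \<Sum>k\<in>UNIV. \<Sum>m\<in>UNIV. \<Sum>i\<in>UNIV. (b $ j * b $ k) * (a $ m * a $ i) * (N (P2 j k) \<bullet> P2 m i))"
      by (simp only: mult_ac)
    also have "\<dots> = N (\<Sum>i\<in>UNIV. \<Sum>j\<in>UNIV. (b$i * b$j) *\<^sub>R P2 i j) \<bullet> (\<Sum>i\<in>UNIV. \<Sum>j\<in>UNIV. (a$i * a$j) *\<^sub>R P2 i j)"
      by (simp only: NS inner_dsum)
    finally show ?thesis .
  qed
  also have "(\<Sum>i\<in>UNIV. \<Sum>j\<in>UNIV. \<Sum>k\<in>UNIV. \<Sum>m\<in>UNIV. a $ i * b $ j * b $ k * a $ m * (N (P2 i k) \<bullet> P2 m j))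
      = N (\<Sum>i\<in>UNIV. \<Sum>j\<in>UNIV. (a$i * b$j) *\<^sub>R P2 i j) \<bullet> (\<Sum>i\<in>UNIV. \<Sum>j\<in>UNIV. (a$i * b$j) *\<^sub>R P2 i j)"
  proof -
    have e: "(\<Sum>j\<in>UNIV. \<Sum>k\<in>UNIV. \<Sum>m\<in>UNIV. a $ i * b $ j * b $ k * a $ m * (N (P2 i k) \<bullet> P2 m j))
        = (\<Sum>k\<in>UNIV. \<Sum>m\<in>UNIV. \<Sum>j\<in>UNIV. a $ i * b $ j * b $ k * a $ m * (N (P2 i k) \<bullet> P2 m j))" for i
      by (rule sum3_rot)
    have "(\<Sum>i\<in>UNIV. \<Sum>j\<in>UNIV. \<Sum>k\<in>UNIV. \<Sum>m\<in>UNIV. a $ i * b $ j * b $ k * a $ m * (N (P2 i k) \<bullet> P2 m j))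
        = (\<Sum>i\<in>UNIV. \<Sum>k\<in>UNIV. \<Sum>m\<in>UNIV. \<Sum>j\<in>UNIV. a $ i * b $ j * b $ k * a $ m * (N (P2 i k) \<bullet> P2 m j))"
      by (simp only: e)
    also have "\<dots> = (\<Sum>i\<in>UNIV. \<Sum>k\<in>UNIV. \<Sum>m\<in>UNIV. \<Sum>j\<in>UNIV. (a $ i * b $ k) * (a $ m * b $ j) * (N (P2 i k) \<bullet> P2 m j))"
      by (simp only: mult_ac)
    also have "\<dots> = N (\<Sum>i\<in>UNIV. \<Sum>j\<in>UNIV. (a$i * b$j) *\<^sub>R P2 i j) \<bullet> (\<Sum>i\<in>UNIV. \<Sum>j\<in>UNIV. (a$i * b$j) *\<^sub>R P2 i j)"
      by (simp only: NS inner_dsum)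
    finally show ?thesis .
  qed
  finally show ?thesis .
qed



definition outer :: "real^'n \<Rightarrow> real^'n \<Rightarrow> real^'n^'n" where
  "outer x y = (\<chi> i j. x$i * y$j)"

definition Bm :: "real^'n^'n \<Rightarrow> real^'n \<Rightarrow> real^'n \<Rightarrow> real^'n^'n" where
  "Bm J x y = outer y x + outer x y + outer (J *v y) (J *v x) + outer (J *v x) (J *v y)"

definition dF :: "real^'n^'n \<Rightarrow> real^'n \<Rightarrow> real^'n \<Rightarrow> (real^'n) \<times> (real^'n^'n)" where
  "dF J p v = (v, (1/2) *\<^sub>R Bm J p v)"

lemma outer_add_left: "outer (a + b) c = outer a c + outer b c"
  and outer_add_right: "outer a (b + c) = outer a b + outer a c"
  and outer_scaleR_left: "outer (r *\<^sub>R a) c = r *\<^sub>R outer a c"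
  and outer_scaleR_right: "outer a (r *\<^sub>R c) = r *\<^sub>R outer a c"
  and outer_minus_left: "outer (- a) c = - outer a c"
  and outer_minus_right: "outer a (- c) = - outer a c"
  and outer_diff_left: "outer (a - b) c = outer a c - outer b c"
  and outer_diff_right: "outer a (b - c) = outer a b - outer a c"
  by (simp_all add: outer_def vec_eq_iff algebra_simps)

lemma inner_outer: "outer a b \<bullet> outer c d = (a \<bullet> c) * (b \<bullet> d)"
  by (simp add: outer_def inner_vec_def sum_product mult_ac)

lemma mv_add: "J *v (a + b) = J *v a + J *v b"
  and mv_scaleR: "J *v (r *\<^sub>R a) = r *\<^sub>R (J *v a)"
  and mv_minus: "J *v (- a) = - (J *v a)"
  and mv_diff: "J *v (a - b) = J *v a - J *v b"
  and mv_zero: "J *v 0 = (0::real^'n)"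
  by (simp_all add: vec_eq_iff matrix_vector_mult_def sum_distrib_left algebra_simps
      sum.distrib sum_subtractf sum_negf)

lemmas Bm_lin = outer_add_left outer_add_right outer_scaleR_left outer_scaleR_right
  outer_minus_left outer_minus_right outer_diff_left outer_diff_right
  mv_add mv_scaleR mv_minus mv_diff

lemma Bm_add_left: "Bm J (a + b) c = Bm J a c + Bm J b c"
  and Bm_add_right: "Bm J a (b + c) = Bm J a b + Bm J a c"
  and Bm_scaleR_left: "Bm J (r *\<^sub>R a) c = r *\<^sub>R Bm J a c"
  and Bm_scaleR_right: "Bm J a (r *\<^sub>R c) = r *\<^sub>R Bm J a c"
  and Bm_minus_left: "Bm J (- a) c = - Bm J a c"
  and Bm_minus_right: "Bm J a (- c) = - Bm J a c"
  and Bm_diff_left: "Bm J (a - b) c = Bm J a c - Bm J b c"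
  and Bm_diff_right: "Bm J a (b - c) = Bm J a b - Bm J a c"
  by (simp_all add: Bm_def Bm_lin algebra_simps)

lemma Bm_sym: "Bm J a b = Bm J b a"
  by (simp add: Bm_def algebra_simps)

lemmas Bm_bilin = Bm_add_left Bm_add_right Bm_scaleR_left Bm_scaleR_right
  Bm_minus_left Bm_minus_right Bm_diff_left Bm_diff_right

locale cstruct =
  fixes J :: "real^'n^'n"
  assumes JJ: "\<And>x. J *v (J *v x) = - x"
    and skew: "\<And>x y. (J *v x) \<bullet> y = - (x \<bullet> (J *v y))"
begin

lemma Jself[simp]: "x \<bullet> (J *v x) = 0"
  using skew[of x x] by (simp add: inner_commute)

lemma Jswap: "x \<bullet> (J *v y) = - (y \<bullet> (J *v x))"
  using skew[of y x] by (simp add: inner_commute)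

lemma Bm_inner:
  "Bm J a b \<bullet> Bm J c d = 4 * ((a \<bullet> c) * (b \<bullet> d) + (a \<bullet> d) * (b \<bullet> c)
      + (a \<bullet> (J *v c)) * (b \<bullet> (J *v d)) + (a \<bullet> (J *v d)) * (b \<bullet> (J *v c)))"
  using Jswap[of c a] Jswap[of d b] Jswap[of c b] Jswap[of d a]
  by (simp add: Bm_def inner_add_left inner_add_right inner_outer skew JJ inner_commute algebra_simps)

lemma dF_inner:
  assumes "p \<bullet> p = 1" "v \<bullet> p = 0" "w \<bullet> p = 0"
  shows "dF J p v \<bullet> dF J p w = 2 * (v \<bullet> w) - (v \<bullet> (J *v p)) * (w \<bullet> (J *v p))"
  using assms Jswap[of p w]
  by (simp add: dF_def Bm_inner inner_commute algebra_simps)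

lemma tproj_J:
  assumes "p \<bullet> p = 1" "X \<bullet> p = 0" "Y \<bullet> p = 0"
  shows "tproj p (J *v X) \<bullet> tproj p (J *v Y) = X \<bullet> Y - (X \<bullet> (J *v p)) * (Y \<bullet> (J *v p))"
  using assms Jswap[of p X] Jswap[of p Y]
  by (simp add: tproj_def inner_diff_left inner_diff_right skew JJ inner_commute algebra_simps)

end

definition Qv :: "real^'n^'n \<Rightarrow> real^'n \<Rightarrow> real^'n \<Rightarrow> real^'n \<Rightarrow> (real^'n) \<times> (real^'n^'n)" where
  "Qv J p X Y = ((- (X \<bullet> Y)) *\<^sub>R p, (1/2) *\<^sub>R (Bm J X Y - (X \<bullet> Y) *\<^sub>R Bm J p p))"

definition wQ :: "real^'n^'n \<Rightarrow> real^'n \<Rightarrow> real^'n \<Rightarrow> real^'n \<Rightarrow> real^'n" where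
  "wQ J p X Y = - (1/2) *\<^sub>R ((X \<bullet> (J *v p)) *\<^sub>R (J *v Y) + (Y \<bullet> (J *v p)) *\<^sub>R (J *v X))
     - ((X \<bullet> (J *v p)) * (Y \<bullet> (J *v p))) *\<^sub>R p"

context cstruct begin

lemma orthQ:
  assumes pp: "p \<bullet> p = 1" and Xp: "X \<bullet> p = 0" and Yp: "Y \<bullet> p = 0" and vp: "v \<bullet> p = 0"
  shows "(Qv J p X Y - dF J p (wQ J p X Y)) \<bullet> dF J p v = 0"
proof -
  have c: "p \<bullet> X = 0" "p \<bullet> Y = 0" "p \<bullet> v = 0" using Xp Yp vp by (simp_all add: inner_commute)
  have s: "p \<bullet> (J *v X) = - (X \<bullet> (J *v p))" "p \<bullet> (J *v Y) = - (Y \<bullet> (J *v p))"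
    "Y \<bullet> (J *v X) = - (X \<bullet> (J *v Y))" "X \<bullet> (J *v v) = - (v \<bullet> (J *v X))"
    "Y \<bullet> (J *v v) = - (v \<bullet> (J *v Y))" "p \<bullet> (J *v v) = - (v \<bullet> (J *v p))"
    by (rule Jswap)+
  have o: "X \<bullet> v = v \<bullet> X" "Y \<bullet> v = v \<bullet> Y" "Y \<bullet> X = X \<bullet> Y" by (simp_all add: inner_commute)
  show ?thesis
    unfolding Qv_def wQ_def dF_def
    apply (simp add: Bm_bilin inner_diff_left inner_diff_right inner_add_left inner_add_right
        Bm_inner JJ skew pp Xp Yp vp c s o)
    apply (simp add: field_simps)
    done
qed

lemma innerQ:
  assumes pp: "p \<bullet> p = 1" and Ap: "A \<bullet> p = 0" and Bp: "B \<bullet> p = 0"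
    and Cp: "C \<bullet> p = 0" and Dp: "D \<bullet> p = 0"
  shows "(Qv J p A B - dF J p (wQ J p A B)) \<bullet> Qv J p C D
     = 3 * (A \<bullet> B) * (C \<bullet> D)
       + ((A \<bullet> C) * (B \<bullet> D) + (A \<bullet> D) * (B \<bullet> C) + (A \<bullet> (J *v C)) * (B \<bullet> (J *v D)) + (A \<bullet> (J *v D)) * (B \<bullet> (J *v C)))
       - 2 * (C \<bullet> D) * (A \<bullet> (J *v p)) * (B \<bullet> (J *v p))
       - 2 * (A \<bullet> B) * (C \<bullet> (J *v p)) * (D \<bullet> (J *v p))
       - 1/2 * ((A \<bullet> (J *v p)) * (C \<bullet> (J *v p)) * (B \<bullet> D) + (B \<bullet> (J *v p)) * (C \<bullet> (J *v p)) * (A \<bullet> D)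
              + (A \<bullet> (J *v p)) * (D \<bullet> (J *v p)) * (B \<bullet> C) + (B \<bullet> (J *v p)) * (D \<bullet> (J *v p)) * (A \<bullet> C))
       + 2 * (A \<bullet> (J *v p)) * (B \<bullet> (J *v p)) * (C \<bullet> (J *v p)) * (D \<bullet> (J *v p))"
proof -
  have c: "p \<bullet> A = 0" "p \<bullet> B = 0" "p \<bullet> C = 0" "p \<bullet> D = 0"
    using Ap Bp Cp Dp by (simp_all add: inner_commute)
  have o: "B \<bullet> A = A \<bullet> B" "C \<bullet> A = A \<bullet> C" "D \<bullet> A = A \<bullet> D" "C \<bullet> B = B \<bullet> C"
    "D \<bullet> B = B \<bullet> D" "D \<bullet> C = C \<bullet> D" by (simp_all add: inner_commute)
  have s: "p \<bullet> (J *v A) = - (A \<bullet> (J *v p))" "p \<bullet> (J *v B) = - (B \<bullet> (J *v p))"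
    "p \<bullet> (J *v C) = - (C \<bullet> (J *v p))" "p \<bullet> (J *v D) = - (D \<bullet> (J *v p))"
    "B \<bullet> (J *v A) = - (A \<bullet> (J *v B))" "C \<bullet> (J *v A) = - (A \<bullet> (J *v C))"
    "D \<bullet> (J *v A) = - (A \<bullet> (J *v D))" "C \<bullet> (J *v B) = - (B \<bullet> (J *v C))"
    "D \<bullet> (J *v B) = - (B \<bullet> (J *v D))" "D \<bullet> (J *v C) = - (C \<bullet> (J *v D))"
    by (rule Jswap)+
  show ?thesis
    unfolding Qv_def wQ_def dF_def
    apply (simp add: Bm_bilin inner_diff_left inner_diff_right inner_add_left inner_add_right
        Bm_inner JJ skew pp Ap Bp Cp Dp c s o)
    apply (simp add: field_simps)
    done
qed

end



lemma surj_hyper: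
  fixes L :: "real^'b::finite \<Rightarrow> real^'a::finite" and p :: "real^'a"
  assumes lin: "linear L" and inj: "inj L" and card: "CARD('a) = CARD('b) + 1" and p: "p \<noteq> 0"
    and orth: "\<And>c. L c \<bullet> p = 0" and z: "z \<bullet> p = 0"
  shows "\<exists>c. L c = z"
proof -
  have S: "subspace (range L)" using lin by (simp add: linear_subspace_image)
  have T: "subspace {x. p \<bullet> x = 0}" by (rule subspace_hyperplane)
  have ST: "range L \<subseteq> {x. p \<bullet> x = 0}" using orth by (auto simp: inner_commute)
  have dS: "dim (range L) = CARD('b)"
    using dim_image_eq[OF lin, of UNIV] inj by (simp add: inj_on_def)
  have dT: "dim {x. p \<bullet> x = 0} = CARD('b)" using dim_hyperplane[OF p] card by simp
  have "range L = {x. p \<bullet> x = 0}" using subspace_dim_equal[OF S T ST] dS dT by simp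
  then have "z \<in> range L" using z by (simp add: inner_commute)
  then show ?thesis by auto
qed

lemma cstruct_of:
  fixes J :: "real^'n::finite^'n"
  assumes "complex_structure J"
  shows "cstruct J"
proof -
  have o: "orthogonal_matrix J" and jj: "J ** J = - mat 1" using assms by (auto simp: complex_structure_def)
  have ot: "orthogonal_transformation (\<lambda>x. J *v x)"
    using o by (simp add: orthogonal_transformation_matrix)
  have JJ: "J *v (J *v x) = - x" for x
  proof -
    have "J *v (J *v x) = (J ** J) *v x" by (simp add: matrix_vector_mul_assoc)
    also have "\<dots> = (- mat 1) *v x" by (simp add: jj)
    also have "\<dots> = - x"
    proof -
      have "(\<Sum>j\<in>UNIV. - (if i = j then 1 else 0) * x $ j) = - x $ i" for i
      proof -
        have "- (if i = j then 1 else 0) * x $ j = (if i = j then - x $ i else 0)" for j by auto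
        then show ?thesis by simp
      qed
      then show ?thesis by (simp add: vec_eq_iff matrix_vector_mult_def mat_def)
    qed
    finally show ?thesis .
  qed
  have pres: "(J *v x) \<bullet> (J *v y) = x \<bullet> y" for x y
    using ot unfolding orthogonal_transformation_def by blast
  show ?thesis
  proof
    show "J *v (J *v x) = - x" for x by (rule JJ)
    show "(J *v x) \<bullet> y = - (x \<bullet> (J *v y))" for x y
      using pres[of x "J *v y"] by (simp add: JJ)
  qed
qed



definition hasD :: "(real^'k::finite \<Rightarrow> 'e::real_normed_vector) \<Rightarrow> ('k \<Rightarrow> 'e) \<Rightarrow> real^'k \<Rightarrow> bool" where
  "hasD f F v \<longleftrightarrow> (f has_derivative (\<lambda>h. \<Sum>j\<in>UNIV. h$j *\<^sub>R F j)) (at v)"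

lemma pair_sum: "(\<Sum>j\<in>S. (a j, b j)) = (\<Sum>j\<in>S. a j, \<Sum>j\<in>S. b j)"
  by (induction S rule: infinite_finite_induct) (auto simp: zero_prod_def)

lemma sf_pair:
  assumes "hasD f F v" "hasD g G v"
  shows "hasD (\<lambda>v. (f v, g v)) (\<lambda>j. (F j, G j)) v"
proof -
  have "((\<lambda>v. (f v, g v)) has_derivative (\<lambda>h. (\<Sum>j\<in>UNIV. h$j *\<^sub>R F j, \<Sum>j\<in>UNIV. h$j *\<^sub>R G j))) (at v)"
    using assms unfolding hasD_def by (rule has_derivative_Pair)
  then show ?thesis unfolding hasD_def by (simp add: pair_sum)
qed

lemma sf_add:
  assumes "hasD f F v" "hasD g G v"
  shows "hasD (\<lambda>v. f v + g v) (\<lambda>j. F j + G j) v"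
proof -
  have "((\<lambda>v. f v + g v) has_derivative (\<lambda>h. (\<Sum>j\<in>UNIV. h$j *\<^sub>R F j) + (\<Sum>j\<in>UNIV. h$j *\<^sub>R G j))) (at v)"
    using assms unfolding hasD_def by (rule has_derivative_add)
  then show ?thesis unfolding hasD_def by (simp add: sum.distrib scaleR_add_right)
qed

lemma sf_scale:
  assumes "hasD f F v"
  shows "hasD (\<lambda>v. c *\<^sub>R f v) (\<lambda>j. c *\<^sub>R F j) v"
proof -
  have "((\<lambda>v. c *\<^sub>R f v) has_derivative (\<lambda>h. c *\<^sub>R (\<Sum>j\<in>UNIV. h$j *\<^sub>R F j))) (at v)"
    using assms unfolding hasD_def by (rule has_derivative_scaleR_right)
  then show ?thesis unfolding hasD_def by (simp add: scaleR_sum_right mult.commute)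
qed

lemma bilinear_Bm: "bilinear (Bm J)"
  unfolding bilinear_def
  by (auto intro!: linearI simp: Bm_bilin)

lemma bb_Bm: "bounded_bilinear (Bm J)"
  using bilinear_Bm bilinear_conv_bounded_bilinear by blast

lemma sf_Bm:
  assumes "hasD f F v" "hasD g G v"
  shows "hasD (\<lambda>v. Bm J (f v) (g v)) (\<lambda>j. Bm J (F j) (g v) + Bm J (f v) (G j)) v"
proof -
  interpret bb: bounded_bilinear "Bm J" by (rule bb_Bm)
  have "((\<lambda>v. Bm J (f v) (g v)) has_derivative
       (\<lambda>h. Bm J (f v) (\<Sum>j\<in>UNIV. h$j *\<^sub>R G j) + Bm J (\<Sum>j\<in>UNIV. h$j *\<^sub>R F j) (g v))) (at v)"
    using assms unfolding hasD_def by (rule bb.FDERIV)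
  then show ?thesis unfolding hasD_def
    by (simp add: bb.sum_left bb.sum_right Bm_bilin sum.distrib scaleR_add_right add.commute)
qed

lemma smooth_pd: "smooth_on U f \<Longrightarrow> smooth_on U (pd i f)"
  unfolding smooth_on_def
proof
  fix k assume "\<forall>k. Ck_on k U f"
  then have "Ck_on (Suc k) U f" by blast
  then show "Ck_on k U (pd i f)" by simp
qed

lemma smooth_diff:
  assumes "open U" "smooth_on U f" "v \<in> U"
  shows "f differentiable (at v)"
proof -
  have "Ck_on (Suc 0) U f" using assms(2) unfolding smooth_on_def by blast
  then have "f differentiable_on U" by simp
  then show ?thesis using assms(1,3) differentiable_on_eq_differentiable_at by blast
qed

lemma smooth_hasD:
  assumes "open U" "smooth_on U f" "v \<in> U"
  shows "hasD f (\<lambda>j. pd j f v) v"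
  unfolding hasD_def by (rule fd_expand[OF smooth_diff[OF assms]])

lemma pd_sym_smooth:
  fixes f :: "real^'k::finite \<Rightarrow> 'e::real_inner"
  assumes U: "open U" "u \<in> U" and sm: "smooth_on U f"
  shows "pd j (pd i f) u = pd i (pd j f) u"
proof -
  have "pd j (pd i f) u \<bullet> e = pd i (pd j f) u \<bullet> e" for e
  proof -
    define D1 where "D1 l v = pd l f v \<bullet> e" for l v
    define D2 where "D2 l m v = pd m (pd l f) v \<bullet> e" for l m v
    have df: "((\<lambda>v. f v \<bullet> e) has_derivative (\<lambda>h. \<Sum>l\<in>UNIV. h$l * D1 l v)) (at v)" if "v \<in> U" for v
      using has_derivative_inner_left[OF fd_expand[OF smooth_diff[OF U(1) sm that]], where b = e]
      by (simp add: D1_def inner_sum_left)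
    have dd: "(D1 l has_derivative (\<lambda>h. \<Sum>m\<in>UNIV. h$m * D2 l m v)) (at v)" if "v \<in> U" for v l
      using has_derivative_inner_left[OF fd_expand[OF smooth_diff[OF U(1) smooth_pd[OF sm] that]], where b = e]
      unfolding D1_def D2_def by (simp add: inner_sum_left)
    have c: "continuous (at u) (D2 l m)" for l m
      unfolding D2_def
      by (intro continuous_inner continuous_const differentiable_imp_continuous_within
          smooth_diff[OF U(1) smooth_pd[OF smooth_pd[OF sm]] U(2)])
    from schwarz_real[OF U df dd c c] show ?thesis by (simp add: D2_def)
  qed
  then have "(pd j (pd i f) u - pd i (pd j f) u) \<bullet> e = 0" for e by (simp add: inner_diff_left)
  from this[of "pd j (pd i f) u - pd i (pd j f) u"] show ?thesis by simp
qed



lemma dF_add: "dF J p (v + w) = dF J p v + dF J p w"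
  and dF_diff: "dF J p (v - w) = dF J p v - dF J p w"
  and dF_scaleR: "dF J p (c *\<^sub>R v) = c *\<^sub>R dF J p v"
  by (simp_all add: dF_def Bm_bilin algebra_simps)

lemma dF_sum: "dF J p (\<Sum>l\<in>S. c l *\<^sub>R w l) = (\<Sum>l\<in>S. c l *\<^sub>R dF J p (w l))"
proof -
  have z: "dF J p 0 = 0" using dF_scaleR[of J p 0 0] by simp
  show ?thesis by (induction S rule: infinite_finite_induct) (auto simp: dF_add dF_scaleR z)
qed

lemma inner_ssum:
  "(\<Sum>i\<in>A. x i *\<^sub>R X i) \<bullet> (\<Sum>j\<in>B. y j *\<^sub>R Y j) = (\<Sum>i\<in>A. \<Sum>j\<in>B. (x i * y j) * (X i \<bullet> Y j))"
proof -
  have l: "(\<Sum>i\<in>A. x i *\<^sub>R X i) \<bullet> Z = (\<Sum>i\<in>A. x i * (X i \<bullet> Z))" for Z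
    by (simp add: inner_sum_left)
  have r: "X i \<bullet> (\<Sum>j\<in>B. y j *\<^sub>R Y j) = (\<Sum>j\<in>B. y j * (X i \<bullet> Y j))" for i
    by (simp add: inner_sum_right)
  show ?thesis unfolding l r by (simp add: sum_distrib_left mult.assoc)
qed

lemma Bm_dsum:
  "(\<Sum>i\<in>UNIV. \<Sum>j\<in>UNIV. (x$i * y$j) *\<^sub>R Bm J (f j) (g i))
    = Bm J (\<Sum>j\<in>UNIV. y$j *\<^sub>R f j) (\<Sum>i\<in>UNIV. x$i *\<^sub>R g i)"
proof -
  interpret bb: bounded_bilinear "Bm J" by (rule bb_Bm)
  show ?thesis
    by (simp add: bb.sum_left bb.sum_right Bm_bilin scaleR_sum_right mult.commute)
qed

lemma Bm_dsum2:
  "(\<Sum>i\<in>UNIV. \<Sum>j\<in>UNIV. (x$i * y$j) *\<^sub>R Bm J q (h i j))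
    = Bm J q (\<Sum>i\<in>UNIV. \<Sum>j\<in>UNIV. (x$i * y$j) *\<^sub>R h i j)"
proof -
  interpret bb: bounded_bilinear "Bm J" by (rule bb_Bm)
  show ?thesis by (simp add: bb.sum_right Bm_bilin)
qed

lemma (in cstruct) wQ_orth:
  assumes "p \<bullet> p = 1" "X \<bullet> p = 0" "Y \<bullet> p = 0"
  shows "wQ J p X Y \<bullet> p = 0"
  using assms Jswap[of p X] Jswap[of p Y]
  by (simp add: wQ_def inner_diff_left inner_add_left skew inner_commute algebra_simps)

definition P3f :: "real^'a^'a \<Rightarrow> (real^'b \<Rightarrow> real^'a) \<Rightarrow> ('k \<Rightarrow> real^'b \<Rightarrow> real^'a)
   \<Rightarrow> ('k \<Rightarrow> 'k \<Rightarrow> real^'b \<Rightarrow> real^'a) \<Rightarrow> ('k \<Rightarrow> 'k \<Rightarrow> 'k \<Rightarrow> real^'a) \<Rightarrow> real^'b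
   \<Rightarrow> 'k \<Rightarrow> 'k \<Rightarrow> 'k \<Rightarrow> (real^'a) \<times> (real^'a^'a)" where
  "P3f J \<phi> \<phi>1 \<phi>2 \<phi>3 u i j k = (\<phi>3 i j k, (1/2) *\<^sub>R ((Bm J (\<phi>2 j k u) (\<phi>1 i u) + Bm J (\<phi>1 j u) (\<phi>2 i k u))
      + (Bm J (\<phi>1 k u) (\<phi>2 i j u) + Bm J (\<phi> u) (\<phi>3 i j k))))"

lemma H4_lemma:
  assumes sym2: "\<And>i j. \<phi>2 i j u = \<phi>2 j i u" and sym3: "\<And>i j k. \<phi>3 j k i = \<phi>3 i k j"
  shows "P3f J \<phi> \<phi>1 \<phi>2 \<phi>3 u j k i = P3f J \<phi> \<phi>1 \<phi>2 \<phi>3 u i k j"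
proof -
    have e1: "Bm J (\<phi>2 k i u) (\<phi>1 j u) = Bm J (\<phi>1 j u) (\<phi>2 i k u)"
      using sym2[of k i] Bm_sym by metis
    have e2: "Bm J (\<phi>1 k u) (\<phi>2 j i u) = Bm J (\<phi>1 k u) (\<phi>2 i j u)"
      using sym2[of j i] by simp
    have e3: "Bm J (\<phi>1 i u) (\<phi>2 j k u) = Bm J (\<phi>2 k j u) (\<phi>1 i u)"
      using sym2[of k j] Bm_sym by metis
    have s3: "\<phi>3 j k i = \<phi>3 i k j" by (rule sym3)
    have ac: "A + B + (C + D) = C + B + (A + D)" for A B C D :: "'z::ab_semigroup_add" by (simp add: ac_simps)
    show ?thesis unfolding P3f_def s3 e1 e2 e3 by (subst ac) (rule refl)
qed



theorem proposition3:
  fixes J :: "real^'a^'a"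
    and \<phi> :: "real^'b \<Rightarrow> real^'a"
    and U :: "(real^'b) set"
    and u a b :: "real^'b"
  assumes "complex_structure J"
    and "CARD('a) = CARD('b) + 1"
    and "open U" and "u \<in> U"
    and "smooth_on U \<phi>"
    and "\<forall>v\<in>U. norm (\<phi> v) = 1"
    and "\<forall>v\<in>U. inj (frechet_derivative \<phi> (at v))"
    and "norm (frechet_derivative \<phi> (at u) a) = 1"
    and "norm (frechet_derivative \<phi> (at u) b) = 1"
    and "frechet_derivative \<phi> (at u) a \<bullet> frechet_derivative \<phi> (at u) b = 0"
  shows "(let p = \<phi> u; X = frechet_derivative \<phi> (at u) a; Y = frechet_derivative \<phi> (at u) b;
              \<xi> = hopf J p;
              s = (\<xi> \<bullet> X)\<^sup>2 + (\<xi> \<bullet> Y)\<^sup>2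
          in sectional_curvature (metric_matrix \<phi> (\<lambda>v. hopf J (\<phi> v))) u a b
             = (1 - 3/4 * s + 3/2 * (A_hopf J p X \<bullet> Y)\<^sup>2) / (2 - s))"
proof -
  note cs = assms(1) and card = assms(2) and U = assms(3) and u = assms(4) and sm = assms(5)
    and n1 = assms(6) and injD = assms(7) and nX = assms(8) and nY = assms(9) and oXY = assms(10)
  interpret cstruct J by (rule cstruct_of[OF cs])
  define \<phi>1 where "\<phi>1 = (\<lambda>i. pd i \<phi>)"
  define \<phi>2 where "\<phi>2 = (\<lambda>i j. pd j (pd i \<phi>))"
  define \<phi>3 where "\<phi>3 = (\<lambda>i j k. pd k (pd j (pd i \<phi>)) u)"
  have d\<phi>: "hasD \<phi> (\<lambda>j. \<phi>1 j v) v" if "v \<in> U" for v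
    using smooth_hasD[OF U sm that] by (simp add: \<phi>1_def)
  have d\<phi>1: "hasD (\<phi>1 i) (\<lambda>j. \<phi>2 i j v) v" if "v \<in> U" for i v
    using smooth_hasD[OF U smooth_pd[OF sm] that] by (simp add: \<phi>1_def \<phi>2_def)
  have d\<phi>2: "hasD (\<phi>2 i j) (\<lambda>k. \<phi>3 i j k) u" for i j
    using smooth_hasD[OF U smooth_pd[OF smooth_pd[OF sm]] u] by (simp add: \<phi>2_def \<phi>3_def)
  have sym2: "\<phi>2 i j v = \<phi>2 j i v" if "v \<in> U" for i j v
    unfolding \<phi>2_def by (rule pd_sym_smooth[OF U that sm])
  have sym3: "\<phi>3 j k i = \<phi>3 i k j" for i j k
  proof -
    have "\<phi>3 j k i = pd i (pd k (pd j \<phi>)) u" by (simp add: \<phi>3_def)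
    also have "\<dots> = pd i (pd j (pd k \<phi>)) u"
      by (rule pd_cong_open[OF U u]) (rule pd_sym_smooth[OF U _ sm])
    also have "\<dots> = pd j (pd i (pd k \<phi>)) u" by (rule pd_sym_smooth[OF U u smooth_pd[OF sm]])
    also have "\<dots> = pd j (pd k (pd i \<phi>)) u"
      by (rule pd_cong_open[OF U u]) (rule pd_sym_smooth[OF U _ sm])
    also have "\<dots> = \<phi>3 i k j" by (simp add: \<phi>3_def)
    finally show ?thesis .
  qed
  have diff\<phi>: "\<phi> differentiable (at v)" if "v \<in> U" for v
    using d\<phi>[OF that] unfolding hasD_def differentiable_def by blast
  have diff\<phi>1: "\<phi>1 i differentiable (at v)" if "v \<in> U" for i v
    using d\<phi>1[OF that] unfolding hasD_def differentiable_def by blast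
  have pp: "\<phi> v \<bullet> \<phi> v = 1" if "v \<in> U" for v
    using n1 that by (simp add: power2_norm_eq_inner[symmetric])
  have pd_const: "pd i (\<lambda>w::real^'b. c) v = 0" for i v and c :: real
    using pd_eq[OF has_derivative_const[of c "at v"]] by simp
  have orth1: "\<phi>1 i v \<bullet> \<phi> v = 0" if v: "v \<in> U" for i v
  proof -
    have "pd i (\<lambda>w. \<phi> w \<bullet> \<phi> w) v = \<phi>1 i v \<bullet> \<phi> v + \<phi> v \<bullet> \<phi>1 i v"
      using pd_inner[OF diff\<phi>[OF v] diff\<phi>[OF v]] by (simp add: \<phi>1_def)
    moreover have "pd i (\<lambda>w. \<phi> w \<bullet> \<phi> w) v = pd i (\<lambda>w. 1) v"
      by (rule pd_cong_open[OF U v]) (simp add: pp)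
    ultimately show ?thesis using pd_const by (simp add: inner_commute)
  qed
  have orth2: "\<phi>2 i j u \<bullet> \<phi> u + \<phi>1 i u \<bullet> \<phi>1 j u = 0" for i j
  proof -
    have "pd j (\<lambda>w. \<phi>1 i w \<bullet> \<phi> w) u = \<phi>2 i j u \<bullet> \<phi> u + \<phi>1 i u \<bullet> \<phi>1 j u"
      using pd_inner[OF diff\<phi>1[OF u] diff\<phi>[OF u], of j i] by (simp add: \<phi>1_def \<phi>2_def)
    moreover have "pd j (\<lambda>w. \<phi>1 i w \<bullet> \<phi> w) u = pd j (\<lambda>w. 0) u"
      by (rule pd_cong_open[OF U u]) (simp add: orth1)
    ultimately show ?thesis using pd_const by simp
  qed
  define P1 where "P1 = (\<lambda>i v. (\<phi>1 i v, (1/2) *\<^sub>R Bm J (\<phi> v) (\<phi>1 i v)))"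
  define P2 where "P2 = (\<lambda>i j v. (\<phi>2 i j v, (1/2) *\<^sub>R (Bm J (\<phi>1 j v) (\<phi>1 i v) + Bm J (\<phi> v) (\<phi>2 i j v))))"
  define P3 where "P3 = P3f J \<phi> \<phi>1 \<phi>2 \<phi>3 u"
  have P1dF: "P1 i v = dF J (\<phi> v) (\<phi>1 i v)" for i v by (simp add: P1_def dF_def)
  have H1: "(P1 i has_derivative (\<lambda>h. \<Sum>j\<in>UNIV. h$j *\<^sub>R P2 i j v)) (at v)" if v: "v \<in> U" for v i
  proof -
    have "hasD (\<lambda>v. (\<phi>1 i v, (1/2) *\<^sub>R Bm J (\<phi> v) (\<phi>1 i v)))
        (\<lambda>j. (\<phi>2 i j v, (1/2) *\<^sub>R (Bm J (\<phi>1 j v) (\<phi>1 i v) + Bm J (\<phi> v) (\<phi>2 i j v)))) v"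
      by (intro sf_pair sf_scale sf_Bm d\<phi>1 d\<phi> v)
    then show ?thesis by (simp add: hasD_def P1_def P2_def)
  qed
  have H2: "P2 i j v = P2 j i v" if v: "v \<in> U" for v i j
    using sym2[OF v, of i j] Bm_sym[of J "\<phi>1 j v" "\<phi>1 i v"] by (simp add: P2_def)
  have H3: "(P2 i j has_derivative (\<lambda>h. \<Sum>k\<in>UNIV. h$k *\<^sub>R P3 i j k)) (at u)" for i j
  proof -
    have "hasD (\<lambda>v. (\<phi>2 i j v, (1/2) *\<^sub>R (Bm J (\<phi>1 j v) (\<phi>1 i v) + Bm J (\<phi> v) (\<phi>2 i j v))))
       (\<lambda>k. (\<phi>3 i j k, (1/2) *\<^sub>R ((Bm J (\<phi>2 j k u) (\<phi>1 i u) + Bm J (\<phi>1 j u) (\<phi>2 i k u))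
      + (Bm J (\<phi>1 k u) (\<phi>2 i j u) + Bm J (\<phi> u) (\<phi>3 i j k))))) u"
      by (intro sf_pair sf_scale sf_add sf_Bm d\<phi>1 d\<phi> d\<phi>2 u)
    then show ?thesis by (simp add: hasD_def P2_def P3_def P3f_def)
  qed
  have H4: "P3 j k i = P3 i k j" for i j k
    unfolding P3_def by (rule H4_lemma, rule sym2[OF u], rule sym3)
  define g where "g = metric_matrix \<phi> (\<lambda>v. hopf J (\<phi> v))"
  have fdX: "frechet_derivative \<phi> (at v) = (\<lambda>h. \<Sum>j\<in>UNIV. h$j *\<^sub>R \<phi>1 j v)" if "v \<in> U" for v
    using d\<phi>[OF that] unfolding hasD_def by (rule frechet_derivative_at[symmetric])
  have H5: "g v = (\<chi> i j. P1 i v \<bullet> P1 j v)" if v: "v \<in> U" for v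
  proof -
    have hd: "((\<lambda>v. J *v \<phi> v) has_derivative (\<lambda>h. J *v (\<Sum>j\<in>UNIV. h$j *\<^sub>R \<phi>1 j v))) (at v)"
      using bounded_linear.has_derivative[OF matrix_vector_mul_bounded_linear d\<phi>[OF v, unfolded hasD_def], of J] .
    have "frechet_derivative (\<lambda>v. hopf J (\<phi> v)) (at v) (axis i 1) = J *v \<phi>1 i v" for i
      using pd_eq[OF hd, of i] by (simp add: pd_def hopf_def)
    moreover have "frechet_derivative \<phi> (at v) (axis i 1) = \<phi>1 i v" for i
      by (simp add: \<phi>1_def pd_def)
    moreover have "\<phi>1 i v \<bullet> \<phi>1 j v + tproj (\<phi> v) (J *v \<phi>1 i v) \<bullet> tproj (\<phi> v) (J *v \<phi>1 j v) = P1 i v \<bullet> P1 j v" for i j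
      using tproj_J[OF pp[OF v] orth1[OF v] orth1[OF v]] dF_inner[OF pp[OF v] orth1[OF v] orth1[OF v]]
      by (simp add: P1dF)
    ultimately have "g v $ i $ j = P1 i v \<bullet> P1 j v" for i j
      by (simp add: g_def metric_matrix_def sasaki_pullback_def)
    then show ?thesis by (simp add: vec_eq_iff)
  qed
  have H6: "invertible (g v)" if v: "v \<in> U" for v
  proof -
    have lin: "linear ((*v) (g v))" by simp
    have "inj ((*v) (g v))"
      unfolding linear_injective_0[OF lin]
    proof (intro allI impI)
      fix c assume c0: "g v *v c = 0"
      define w where "w = (\<Sum>i\<in>UNIV. c$i *\<^sub>R P1 i v)"
      have "c \<bullet> (g v *v c) = w \<bullet> w"
        by (simp add: H5[OF v] w_def inner_vec_def matrix_vector_mult_def inner_sum_left inner_sum_right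
            sum_distrib_left mult_ac inner_commute)
      then have "w = 0" using c0 by simp
      then have "fst w = 0" by simp
      moreover have "fst w = frechet_derivative \<phi> (at v) c"
        by (simp add: w_def fdX[OF v] P1_def pair_sum scaleR_Pair)
      ultimately have "frechet_derivative \<phi> (at v) c = 0" by simp
      moreover have "linear (frechet_derivative \<phi> (at v))"
        using d\<phi>[OF v] unfolding hasD_def fdX[OF v, symmetric] using has_derivative_linear by blast
      ultimately show "c = 0" using injD v linear_injective_0 by blast
    qed
    then have "det (matrix ((*v) (g v))) \<noteq> 0" using det_nz_iff_inj[OF lin] by blast
    then show ?thesis by (simp add: invertible_det_nz)
  qed
  have G: "(\<Sum>l\<in>UNIV. riemann g u l i j k * g u $ l $ m) =
     (P2 j k u - (\<Sum>l\<in>UNIV. (\<Sum>s\<in>UNIV. matrix_inv (g u) $ l $ s * (P2 j k u \<bullet> P1 s u)) *\<^sub>R P1 l u)) \<bullet> P2 m i u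
   - (P2 i k u - (\<Sum>l\<in>UNIV. (\<Sum>s\<in>UNIV. matrix_inv (g u) $ l $ s * (P2 i k u \<bullet> P1 s u)) *\<^sub>R P1 l u)) \<bullet> P2 m j u" for i j k m
    by (rule gauss[OF U u H1 H2 H3 H4 H5 H6])
  define N where "N = (\<lambda>w. w - (\<Sum>l\<in>UNIV. (\<Sum>s\<in>UNIV. matrix_inv (g u) $ l $ s * (w \<bullet> P1 s u)) *\<^sub>R P1 l u))"
  have linN: "linear N"
  proof (rule linearI)
    fix x y :: "(real^'a) \<times> (real^'a^'a)" and r :: real
    show "N (x + y) = N x + N y"
      by (simp add: N_def inner_add_left distrib_left sum.distrib scaleR_add_left algebra_simps)
    show "N (r *\<^sub>R x) = r *\<^sub>R N x"
      by (simp add: N_def scaleR_sum_right scaleR_diff_right sum_distrib_left mult_ac)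
  qed
  have GN: "(\<Sum>l\<in>UNIV. riemann g u l i j k * g u $ l $ m) = N (P2 j k u) \<bullet> P2 m i u - N (P2 i k u) \<bullet> P2 m j u" for i j k m
    unfolding G N_def by simp
  define B2 where "B2 = (\<lambda>x y. (\<Sum>i\<in>UNIV. \<Sum>j\<in>UNIV. (x$i * y$j) *\<^sub>R P2 i j u))"
  have num: "(\<Sum>i\<in>UNIV. \<Sum>j\<in>UNIV. \<Sum>k\<in>UNIV. \<Sum>l\<in>UNIV. \<Sum>m\<in>UNIV.
            a $ i * b $ j * b $ k * a $ m * riemann g u l i j k * g u $ l $ m)
       = N (B2 b b) \<bullet> B2 a a - N (B2 a b) \<bullet> B2 a b"
    unfolding B2_def by (rule sc_contract[OF linN GN])
  define p where "p = \<phi> u"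
  define D where "D = frechet_derivative \<phi> (at u)"
  define S where "S = (\<lambda>x y. (\<Sum>i\<in>UNIV. \<Sum>j\<in>UNIV. (x$i * y$j) *\<^sub>R \<phi>2 i j u))"
  have Dexp: "D x = (\<Sum>j\<in>UNIV. x$j *\<^sub>R \<phi>1 j u)" for x
    by (simp add: D_def fdX[OF u])
  have ppu: "p \<bullet> p = 1" using pp[OF u] by (simp add: p_def)
  have Dorth: "D x \<bullet> p = 0" for x
    by (simp add: Dexp inner_sum_left orth1[OF u] p_def)
  have B2a: "B2 x y = (S x y, (1/2) *\<^sub>R (Bm J (D y) (D x) + Bm J p (S x y)))" for x y
  proof -
    have "B2 x y = (S x y, (\<Sum>i\<in>UNIV. \<Sum>j\<in>UNIV. (x$i * y$j) *\<^sub>R ((1/2) *\<^sub>R (Bm J (\<phi>1 j u) (\<phi>1 i u) + Bm J (\<phi> u) (\<phi>2 i j u)))))"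
      by (simp add: B2_def S_def P2_def scaleR_Pair pair_sum)
    also have "(\<Sum>i\<in>UNIV. \<Sum>j\<in>UNIV. (x$i * y$j) *\<^sub>R ((1/2) *\<^sub>R (Bm J (\<phi>1 j u) (\<phi>1 i u) + Bm J (\<phi> u) (\<phi>2 i j u))))
       = (1/2) *\<^sub>R ((\<Sum>i\<in>UNIV. \<Sum>j\<in>UNIV. (x$i * y$j) *\<^sub>R Bm J (\<phi>1 j u) (\<phi>1 i u))
           + (\<Sum>i\<in>UNIV. \<Sum>j\<in>UNIV. (x$i * y$j) *\<^sub>R Bm J (\<phi> u) (\<phi>2 i j u)))"
      by (simp add: scaleR_sum_right scaleR_add_right sum.distrib)
    also have "\<dots> = (1/2) *\<^sub>R (Bm J (D y) (D x) + Bm J p (S x y))"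
      by (simp only: Bm_dsum Bm_dsum2 Dexp S_def p_def)
    finally show ?thesis .
  qed
  have B2eq: "B2 x y = Qv J p (D x) (D y) + dF J p (S x y + (D x \<bullet> D y) *\<^sub>R p)" for x y
    unfolding B2a using Bm_sym[of J "D y" "D x"]
    by (simp add: Qv_def dF_def Bm_bilin algebra_simps)
  have Zorth: "(S x y + (D x \<bullet> D y) *\<^sub>R p) \<bullet> p = 0" for x y
  proof -
    have e1: "D x \<bullet> D y = (\<Sum>i\<in>UNIV. \<Sum>j\<in>UNIV. (x$i * y$j) * (\<phi>1 i u \<bullet> \<phi>1 j u))"
      unfolding Dexp by (rule inner_ssum)
    have e2: "S x y \<bullet> p = (\<Sum>i\<in>UNIV. \<Sum>j\<in>UNIV. (x$i * y$j) * (\<phi>2 i j u \<bullet> \<phi> u))"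
      by (simp add: S_def p_def inner_sum_left)
    have "S x y \<bullet> p + D x \<bullet> D y = (\<Sum>i\<in>UNIV. \<Sum>j\<in>UNIV. (x$i * y$j) * (\<phi>2 i j u \<bullet> \<phi> u + \<phi>1 i u \<bullet> \<phi>1 j u))"
      unfolding e1 e2 by (simp add: distrib_left sum.distrib)
    also have "\<dots> = 0" by (simp add: orth2)
    finally show ?thesis using ppu by (simp add: inner_add_left)
  qed
  have linD: "linear D" using d\<phi>[OF u] unfolding hasD_def D_def fdX[OF u, symmetric]
    using has_derivative_linear by blast
  have pne: "p \<noteq> 0" using ppu by auto
  have P1u: "P1 s u = dF J p (\<phi>1 s u)" for s by (simp add: P1dF p_def)
  have gsym: "g u $ i $ j = g u $ j $ i" for i j by (simp add: H5[OF u] inner_commute)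
  have Nproj: "N w = w - dF J p z"
    if z: "z \<bullet> p = 0" and o: "\<And>v. v \<bullet> p = 0 \<Longrightarrow> (w - dF J p z) \<bullet> dF J p v = 0" for w z
  proof -
    obtain c where c: "D c = z"
      using surj_hyper[OF linD _ card pne Dorth z] injD u by (auto simp: D_def)
    have sumP1: "(\<Sum>l\<in>UNIV. c$l *\<^sub>R P1 l u) = dF J p z"
      by (simp add: P1u dF_sum[symmetric] c[symmetric] Dexp)
    have r: "w \<bullet> P1 s u = (\<Sum>l\<in>UNIV. c$l * g u $ l $ s)" for s
    proof -
      have "(w - dF J p z) \<bullet> P1 s u = 0" unfolding P1u by (rule o) (simp add: orth1[OF u] p_def)
      then have "w \<bullet> P1 s u = dF J p z \<bullet> P1 s u" by (simp add: inner_diff_left)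
      also have "\<dots> = (\<Sum>l\<in>UNIV. c$l * g u $ l $ s)"
        unfolding sumP1[symmetric] by (simp add: inner_sum_left H5[OF u])
      finally show ?thesis .
    qed
    have coef: "(\<Sum>s\<in>UNIV. matrix_inv (g u) $ l $ s * (w \<bullet> P1 s u)) = c$l" for l
    proof -
      have "(\<Sum>s\<in>UNIV. matrix_inv (g u) $ l $ s * (w \<bullet> P1 s u))
          = (\<Sum>s\<in>UNIV. \<Sum>m\<in>UNIV. c$m * (matrix_inv (g u) $ l $ s * g u $ s $ m))"
        by (simp add: r sum_distrib_left gsym mult_ac)
      also have "\<dots> = (\<Sum>m\<in>UNIV. c$m * (\<Sum>s\<in>UNIV. matrix_inv (g u) $ l $ s * g u $ s $ m))"
        by (subst sum.swap) (simp add: sum_distrib_left)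
      also have "\<dots> = (\<Sum>m\<in>UNIV. c$m * (matrix_inv (g u) ** g u) $ l $ m)"
        by (simp add: matrix_matrix_mult_def)
      also have "\<dots> = c$l"
        using minv_left[OF H6[OF u]] by (simp add: mat_def if_distrib cong: if_cong)
      finally show ?thesis .
    qed
    show ?thesis unfolding N_def coef sumP1 ..
  qed
  have Xp: "D x \<bullet> p = 0" for x by (rule Dorth)
  have NB: "N (B2 x y) = Qv J p (D x) (D y) - dF J p (wQ J p (D x) (D y))" for x y
  proof -
    let ?Z = "S x y + (D x \<bullet> D y) *\<^sub>R p"
    have "N (B2 x y) = B2 x y - dF J p (?Z + wQ J p (D x) (D y))"
    proof (rule Nproj)
      show "(?Z + wQ J p (D x) (D y)) \<bullet> p = 0"
        using Zorth[of x y] wQ_orth[OF ppu Xp Xp] by (simp add: inner_add_left)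
      have e: "B2 x y - dF J p (?Z + wQ J p (D x) (D y)) = Qv J p (D x) (D y) - dF J p (wQ J p (D x) (D y))"
        unfolding B2eq by (simp add: dF_add)
      show "(B2 x y - dF J p (?Z + wQ J p (D x) (D y))) \<bullet> dF J p v = 0" if "v \<bullet> p = 0" for v
        unfolding e by (rule orthQ[OF ppu Xp Xp that])
    qed
    also have "\<dots> = Qv J p (D x) (D y) - dF J p (wQ J p (D x) (D y))"
      unfolding B2eq by (simp add: dF_add)
    finally show ?thesis .
  qed
  have NBB: "N (B2 x y) \<bullet> B2 x' y' = (Qv J p (D x) (D y) - dF J p (wQ J p (D x) (D y))) \<bullet> Qv J p (D x') (D y')" for x y x' y'
    unfolding NB B2eq[of x' y'] inner_add_right using orthQ[OF ppu Xp Xp Zorth[of x' y']] by simp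
  have gf: "gform g u x y = 2 * (D x \<bullet> D y) - (D x \<bullet> (J *v p)) * (D y \<bullet> (J *v p))" for x y
  proof -
    have sP: "(\<Sum>i\<in>UNIV. x$i *\<^sub>R P1 i u) = dF J p (D x)" for x
      by (simp add: P1u dF_sum[symmetric] Dexp)
    have "gform g u x y = (\<Sum>i\<in>UNIV. x$i *\<^sub>R P1 i u) \<bullet> (\<Sum>j\<in>UNIV. y$j *\<^sub>R P1 j u)"
      unfolding inner_ssum by (simp add: gform_def H5[OF u])
    also have "\<dots> = dF J p (D x) \<bullet> dF J p (D y)" by (simp only: sP)
    also have "\<dots> = 2 * (D x \<bullet> D y) - (D x \<bullet> (J *v p)) * (D y \<bullet> (J *v p))"
      by (rule dF_inner[OF ppu Xp Xp])
    finally show ?thesis .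
  qed
  define X where "X = D a"
  define Y where "Y = D b"
  define x where "x = X \<bullet> (J *v p)"
  define y where "y = Y \<bullet> (J *v p)"
  define \<omega> where "\<omega> = X \<bullet> (J *v Y)"
  have XX: "X \<bullet> X = 1" using nX by (simp add: X_def D_def power2_norm_eq_inner[symmetric])
  have YY: "Y \<bullet> Y = 1" using nY by (simp add: Y_def D_def power2_norm_eq_inner[symmetric])
  have XY: "X \<bullet> Y = 0" using oXY by (simp add: X_def Y_def D_def)
  have YX: "Y \<bullet> X = 0" using XY by (simp add: inner_commute)
  have XpX: "X \<bullet> p = 0" "Y \<bullet> p = 0" by (simp_all add: X_def Y_def Dorth)
  have YJX: "Y \<bullet> (J *v X) = - \<omega>" unfolding \<omega>_def by (rule Jswap)
  have numv: "N (B2 b b) \<bullet> B2 a a - N (B2 a b) \<bullet> B2 a b = 2 * (1 - 3/4 * (x\<^sup>2 + y\<^sup>2) + 3/2 * \<omega>\<^sup>2)"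
    unfolding NBB X_def[symmetric] Y_def[symmetric]
      innerQ[OF ppu XpX(2) XpX(2) XpX(1) XpX(1)] innerQ[OF ppu XpX(1) XpX(2) XpX(1) XpX(2)]
    by (simp add: XX YY XY YX YJX x_def[symmetric] y_def[symmetric] \<omega>_def[symmetric] algebra_simps power2_eq_square)
  have denv: "gform g u a a * gform g u b b - (gform g u a b)\<^sup>2 = 2 * (2 - (x\<^sup>2 + y\<^sup>2))"
    unfolding gf X_def[symmetric] Y_def[symmetric]
    by (simp add: XX YY XY x_def[symmetric] y_def[symmetric] algebra_simps power2_eq_square)
  have hx: "hopf J p \<bullet> X = x" "hopf J p \<bullet> Y = y"
    using Jswap[of p X] Jswap[of p Y] by (simp_all add: hopf_def skew x_def y_def)
  have ha: "A_hopf J p X \<bullet> Y = \<omega>"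
  proof -
    have "p \<bullet> Y = 0" using XpX by (simp add: inner_commute)
    then show ?thesis by (simp add: A_hopf_def tproj_def inner_diff_left skew \<omega>_def)
  qed
  have "sectional_curvature g u a b = (2 * (1 - 3/4 * (x\<^sup>2 + y\<^sup>2) + 3/2 * \<omega>\<^sup>2)) / (2 * (2 - (x\<^sup>2 + y\<^sup>2)))"
    unfolding sectional_curvature_def num numv denv ..
  also have "\<dots> = (1 - 3/4 * (x\<^sup>2 + y\<^sup>2) + 3/2 * \<omega>\<^sup>2) / (2 - (x\<^sup>2 + y\<^sup>2))"
    by (rule mult_divide_mult_cancel_left) simp
  finally show ?thesis
    unfolding Let_def g_def[symmetric] p_def[symmetric] D_def[symmetric] X_def[symmetric] Y_def[symmetric] hx ha .
qed


end
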